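(* Let $n \geq 3$. Then $$\max_{G} T_{\min}(G) = \left\lfloor \tfrac{n}{2} \right\rfloor \cdot \left\lceil \tfrac{n}{2} \right\rceil \qquad\text{and}\qquad \max_{G} T_{\max}(G) = (n-1)^2,$$ where both maxima range over all strongly connected directed graphs $G$ on $n$ vertices.
   Context: Let $G=(V,E)$ be a strongly connected directed graph with $|V| = n$. An ordering is a bijection $\pi: V \to \{1,\dots,n\}$. For vertices $u,v$, let $d_G(u,v)$ denote the length (number of edges) of a shortest directed path from $u$ to $v$ in $G$. The communication time of ordering $\pi$ on $G$ is $$T(G,\pi) = \sum_{i=1}^{n-1} d_G\big(\pi^{-1}(i), \pi^{-1}(i+1)\big).$$ Define $T_{\min}(G) = \min_{\pi} T(G,\pi)$ and $T_{\max}(G) = \max_{\pi} T(G,\pi)$ over all orderings $\pi$. *)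

theory Defs
  imports Main
begin

definition strongly_connected :: "'a set \<Rightarrow> ('a \<times> 'a) set \<Rightarrow> bool" where
  "strongly_connected V E \<longleftrightarrow> E \<subseteq> V \<times> V \<and> (\<forall>u\<in>V. \<forall>v\<in>V. (u, v) \<in> E\<^sup>*)"

definition dist :: "('a \<times> 'a) set \<Rightarrow> 'a \<Rightarrow> 'a \<Rightarrow> nat" where
  "dist E u v = (LEAST k. (u, v) \<in> E ^^ k)"

definition orderings :: "'a set \<Rightarrow> ('a \<Rightarrow> nat) set" where
  "orderings V = {\<pi>. bij_betw \<pi> V {1..card V}}"

definition comm_time :: "'a set \<Rightarrow> ('a \<times> 'a) set \<Rightarrow> ('a \<Rightarrow> nat) \<Rightarrow> nat" where
  "comm_time V E \<pi> =
     (\<Sum>i = 1..<card V. dist E (inv_into V \<pi> i) (inv_into V \<pi> (i + 1)))"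

definition T_min :: "'a set \<Rightarrow> ('a \<times> 'a) set \<Rightarrow> nat" where
  "T_min V E = Min (comm_time V E ` orderings V)"

definition T_max :: "'a set \<Rightarrow> ('a \<times> 'a) set \<Rightarrow> nat" where
  "T_max V E = Max (comm_time V E ` orderings V)"

definition is_max :: "nat set \<Rightarrow> nat \<Rightarrow> bool" where
  "is_max S x \<longleftrightarrow> x \<in> S \<and> (\<forall>y\<in>S. y \<le> x)"

end

theory Submission
  imports Defs
begin


lemma dist_walk:
  assumes "(u,v) \<in> E\<^sup>*"
  shows "(u,v) \<in> E ^^ dist E u v"
proof -
  obtain k where "(u,v) \<in> E ^^ k" using assms rtrancl_imp_relpow by blast
  then show ?thesis unfolding dist_def by (rule LeastI)
qed

lemma dist_le: "(u,v) \<in> E ^^ k \<Longrightarrow> dist E u v \<le> k"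
  unfolding dist_def by (rule Least_le)

lemma dist_triangle:
  assumes "(x,y) \<in> E\<^sup>*" "(y,z) \<in> E\<^sup>*"
  shows "dist E x z \<le> dist E x y + dist E y z"
proof -
  have "(x,z) \<in> E ^^ (dist E x y + dist E y z)"
    using dist_walk[OF assms(1)] dist_walk[OF assms(2)] by (auto simp: relpow_add)
  then show ?thesis by (rule dist_le)
qed

lemma min_walk_inj:
  assumes "(u,v) \<in> E\<^sup>*"
  obtains f where "f 0 = u" "f (dist E u v) = v"
    "\<forall>i<dist E u v. (f i, f (Suc i)) \<in> E" "inj_on f {0..dist E u v}"
proof -
  let ?d = "dist E u v"
  obtain f where f: "f 0 = u" "f ?d = v" "\<forall>i<?d. (f i, f (Suc i)) \<in> E"
    using dist_walk[OF assms] unfolding relpow_fun_conv by blast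
  have "inj_on f {0..?d}"
  proof (rule ccontr)
    assume "\<not> inj_on f {0..?d}"
    then obtain i j where ij: "i \<in> {0..?d}" "j \<in> {0..?d}" "i \<noteq> j" "f i = f j"
      unfolding inj_on_def by blast
    then obtain a b where ab: "a < b" "b \<le> ?d" "f a = f b"
      by (metis atLeastAtMost_iff linorder_neqE_nat)
    define g where "g t = (if t \<le> a then f t else f (t + (b - a)))" for t
    have "g 0 = u" using f by (simp add: g_def)
    moreover have "g (?d - (b - a)) = v"
    proof (cases "?d - (b - a) \<le> a")
      case True
      then have "?d = b" using ab by linarith
      then show ?thesis using f ab True by (simp add: g_def)
    next
      case False
      then show ?thesis using f ab by (simp add: g_def)
    qed
    moreover have "\<forall>i<?d - (b - a). (g i, g (Suc i)) \<in> E"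
    proof (intro allI impI)
      fix i assume i: "i < ?d - (b - a)"
      show "(g i, g (Suc i)) \<in> E"
      proof (cases "i < a")
        case True then show ?thesis using f ab i by (auto simp: g_def)
      next
        case False
        then show ?thesis
        proof (cases "i = a")
          case True
          then have "(f b, f (Suc b)) \<in> E" using f ab i by auto
          then show ?thesis using True ab by (auto simp: g_def)
        next
          case False
          then have "i > a" using \<open>\<not> i < a\<close> by simp
          then show ?thesis using f ab i by (auto simp: g_def)
        qed
      qed
    qed
    ultimately have "(u,v) \<in> E ^^ (?d - (b - a))" unfolding relpow_fun_conv by blast
    then have "?d \<le> ?d - (b - a)" by (rule dist_le)
    then show False using ab by linarith
  qed
  then show ?thesis using that f by blast
qed

lemma dist_bound:
  assumes "strongly_connected V E" "finite V" "u \<in> V" "v \<in> V"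
  shows "dist E u v \<le> card V - 1"
proof -
  have r: "(u,v) \<in> E\<^sup>*" using assms unfolding strongly_connected_def by blast
  have EV: "E \<subseteq> V \<times> V" using assms unfolding strongly_connected_def by blast
  obtain f where f: "f 0 = u" "f (dist E u v) = v"
    "\<forall>i<dist E u v. (f i, f (Suc i)) \<in> E" "inj_on f {0..dist E u v}"
    using min_walk_inj[OF r] by blast
  have "f ` {0..dist E u v} \<subseteq> V"
  proof
    fix x assume "x \<in> f ` {0..dist E u v}"
    then obtain i where i: "i \<le> dist E u v" "x = f i" by auto
    show "x \<in> V"
    proof (cases i)
      case 0 then show ?thesis using i f assms by simp
    next
      case (Suc j) then have "(f j, f i) \<in> E" using f i by auto
      then show ?thesis using EV i by auto
    qed
  qed
  then have "card (f ` {0..dist E u v}) \<le> card V" using assms(2) card_mono by blast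
  then have "Suc (dist E u v) \<le> card V" using card_image[OF f(4)] by simp
  then show ?thesis by simp
qed

lemma arith_ab: "D \<le> (c::nat) \<Longrightarrow> D * (c - D) \<le> (c div 2) * ((c + 1) div 2)"
proof -
  assume a: "D \<le> c"
  obtain q where q: "c = 2*q \<or> c = 2*q+1" by (metis odd_two_times_div_two_succ dvd_mult_div_cancel even_iff_mod_2_eq_zero)
  have sq: "0 \<le> (int q - int D)^2" by simp
  have sq2: "0 \<le> (int q + 1 - int D) * (int q - int D)"
  proof (cases "int D \<le> int q")
    case True then show ?thesis by simp
  next
    case False then show ?thesis by (intro mult_nonpos_nonpos) auto
  qed
  have "int (D * (c - D)) \<le> int ((c div 2) * ((c + 1) div 2))"
    using q
  proof
    assume c: "c = 2*q"
    then have "int (D * (c - D)) = int D * (2 * int q - int D)" using a by (simp add: of_nat_diff)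
    moreover have "int ((c div 2) * ((c + 1) div 2)) = int q * int q" using c by simp
    ultimately show ?thesis using sq by (simp add: power2_eq_square algebra_simps)
  next
    assume c: "c = 2*q+1"
    then have "int (D * (c - D)) = int D * (2 * int q + 1 - int D)" using a by (simp add: of_nat_diff)
    moreover have "int ((c div 2) * ((c + 1) div 2)) = int q * (int q + 1)" using c by (simp add: algebra_simps)
    ultimately show ?thesis using sq2 by (simp add: algebra_simps)
  qed
  then show ?thesis by linarith
qed

lemma ord_from_bij:
  assumes "bij_betw g {1..card V} V"
  shows "inv_into {1..card V} g \<in> orderings V"
    "comm_time V E (inv_into {1..card V} g) = (\<Sum>i = 1..<card V. dist E (g i) (g (i+1)))"
proof -
  show "inv_into {1..card V} g \<in> orderings V"
    using bij_betw_inv_into[OF assms] unfolding orderings_def by simp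
  show "comm_time V E (inv_into {1..card V} g) = (\<Sum>i = 1..<card V. dist E (g i) (g (i+1)))"
    unfolding comm_time_def
  proof (rule sum.cong)
    fix i assume "i \<in> {1..<card V}"
    then have "i \<in> {1..card V}" "i+1 \<in> {1..card V}" by auto
    then show "dist E (inv_into V (inv_into {1..card V} g) i) (inv_into V (inv_into {1..card V} g) (i + 1)) = dist E (g i) (g (i+1))"
      using inv_into_inv_into_eq[OF assms] by presburger
  qed simp
qed

lemma ord_inv:
  assumes "\<pi> \<in> orderings V"
  shows "bij_betw (inv_into V \<pi>) {1..card V} V"
  using assms unfolding orderings_def by (simp add: bij_betw_inv_into)

lemma comm_time_bound:
  assumes sc: "strongly_connected V E" and fin: "finite V" and p: "\<pi> \<in> orderings V"
  shows "comm_time V E \<pi> \<le> (card V - 1) * (card V - 1)"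
proof -
  have b: "bij_betw (inv_into V \<pi>) {1..card V} V" by (rule ord_inv[OF p])
  have "comm_time V E \<pi> \<le> (\<Sum>i = 1..<card V. card V - 1)"
    unfolding comm_time_def
  proof (rule sum_mono)
    fix i assume i: "i \<in> {1..<card V}"
    have "inv_into V \<pi> i \<in> V" "inv_into V \<pi> (i+1) \<in> V"
      using b i bij_betwE by fastforce+
    then show "dist E (inv_into V \<pi> i) (inv_into V \<pi> (i + 1)) \<le> card V - 1"
      using dist_bound[OF sc fin] by blast
  qed
  also have "\<dots> = (card V - 1) * (card V - 1)" by simp
  finally show ?thesis .
qed

lemma orderings_nonempty:
  assumes "finite V"
  shows "orderings V \<noteq> {}"
proof -
  obtain xs where xs: "set xs = V" "distinct xs" using finite_distinct_list[OF assms] by blast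
  have l: "length xs = card V" using xs distinct_card by fastforce
  have "bij_betw (\<lambda>i. xs ! (i - 1)) {1..card V} V"
  proof -
    have "bij_betw ((!) xs) {..<length xs} (set xs)" by (rule bij_betw_nth) (use xs in auto)
    moreover have "bij_betw (\<lambda>i. i - 1) {1..card V} {..<length xs}"
      unfolding l by (rule bij_betw_byWitness[where f'="\<lambda>i. i + 1"]) auto
    ultimately show ?thesis using xs bij_betw_trans unfolding comp_def by fastforce
  qed
  then show ?thesis using ord_from_bij(1) by blast
qed

lemma image_finite:
  assumes sc: "strongly_connected V E" and fin: "finite V"
  shows "finite (comm_time V E ` orderings V)"
proof (rule finite_subset)
  show "comm_time V E ` orderings V \<subseteq> {..(card V - 1) * (card V - 1)}"
    using comm_time_bound[OF sc fin] by auto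
qed simp


lemma list_bij:
  assumes "distinct xs" "set xs = V"
  shows "bij_betw (\<lambda>i. xs ! (i - 1)) {1..card V} V"
proof -
  have l: "length xs = card V" using assms distinct_card by fastforce
  have "bij_betw ((!) xs) {..<length xs} (set xs)" by (rule bij_betw_nth) (use assms in auto)
  moreover have "bij_betw (\<lambda>i. i - 1) {1..card V} {..<length xs}"
    unfolding l by (rule bij_betw_byWitness[where f'="\<lambda>i. i + 1"]) auto
  ultimately show ?thesis using assms bij_betw_trans unfolding comp_def by fastforce
qed

lemma walk_in_V:
  assumes EV: "E \<subseteq> V \<times> V" and u: "f 0 \<in> V" and w: "\<forall>i<d. (f i, f (Suc i)) \<in> E"
  shows "f ` {0..d} \<subseteq> V"
proof
  fix x assume "x \<in> f ` {0..d}"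
  then obtain i where i: "i \<le> d" "x = f i" by auto
  show "x \<in> V"
  proof (cases i)
    case 0 then show ?thesis using i u by simp
  next
    case (Suc j) then have "(f j, f i) \<in> E" using w i by auto
    then show ?thesis using EV i by auto
  qed
qed

lemma Tmin_upper:
  assumes sc: "strongly_connected V E" and fin: "finite V" and ne: "V \<noteq> {}"
  shows "\<exists>\<pi>\<in>orderings V. comm_time V E \<pi> \<le> (card V div 2) * ((card V + 1) div 2)"
proof -
  define c where "c = card V"
  have EV: "E \<subseteq> V \<times> V" using sc unfolding strongly_connected_def by blast
  define DS where "DS = (\<lambda>(x,y). dist E x y) ` (V \<times> V)"
  have DSf: "finite DS" "DS \<noteq> {}" using fin ne unfolding DS_def by auto
  define D where "D = Max DS"
  obtain u z where uz: "u \<in> V" "z \<in> V" "dist E u z = D"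
    using Max_in[OF DSf] unfolding D_def DS_def by auto
  have Dmax: "dist E x y \<le> D" if "x \<in> V" "y \<in> V" for x y
    using Max_ge[OF DSf(1)] that unfolding D_def DS_def by fastforce
  have r: "(u,z) \<in> E\<^sup>*" using sc uz unfolding strongly_connected_def by blast
  obtain f where f: "f 0 = u" "f D = z" "\<forall>i<D. (f i, f (Suc i)) \<in> E" "inj_on f {0..D}"
    using min_walk_inj[OF r] uz(3) by metis
  have fV: "f ` {0..D} \<subseteq> V" using walk_in_V[OF EV _ f(3)] f(1) uz(1) by simp
  have Dc: "D \<le> c - 1" using dist_bound[OF sc fin uz(1,2)] uz(3) c_def by simp
  obtain ys where ys: "set ys = V - f ` {0..D}" "distinct ys"
    using finite_distinct_list[of "V - f ` {0..D}"] fin by blast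
  define xs where "xs = map f [0..<Suc D] @ ys"
  have dm: "distinct (map f [0..<Suc D])"
    unfolding distinct_map set_upt atLeastLessThanSuc_atLeastAtMost using f(4) by simp
  have sm: "set (map f [0..<Suc D]) = f ` {0..D}"
    unfolding set_map set_upt atLeastLessThanSuc_atLeastAtMost by simp
  have dxs: "distinct xs" unfolding xs_def distinct_append using ys dm sm by auto
  have sxs: "set xs = V" unfolding xs_def set_append sm using ys fV by auto
  define g where "g i = xs ! (i - 1)" for i
  have bij: "bij_betw g {1..c} V" using list_bij[OF dxs sxs] unfolding g_def c_def .
  have gV: "g i \<in> V" if "i \<in> {1..c}" for i using bij that bij_betwE by blast
  have "comm_time V E (inv_into {1..card V} g) = (\<Sum>i = 1..<c. dist E (g i) (g (i+1)))"
    using ord_from_bij(2)[OF bij[unfolded c_def]] c_def by simp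
  also have "\<dots> \<le> (\<Sum>i = 1..<c. (if i \<le> D then 1 else D))"
  proof (rule sum_mono)
    fix i assume i: "i \<in> {1..<c}"
    show "dist E (g i) (g (i+1)) \<le> (if i \<le> D then 1 else D)"
    proof (cases "i \<le> D")
      case True
      have nx: "xs ! j = f j" if "j < Suc D" for j
      proof -
        have "xs ! j = map f [0..<Suc D] ! j" unfolding xs_def
          using that by (simp only: nth_append length_map length_upt) simp
        also have "\<dots> = f j" using that by (simp only: nth_map length_upt nth_upt) simp
        finally show ?thesis .
      qed
      have "g i = f (i - 1)" unfolding g_def using True i nx by simp
      moreover have "g (i+1) = f i" unfolding g_def using True i nx by simp
      moreover have "(f (i-1), f i) \<in> E"
      proof -
        have a: "i - 1 < D" "Suc (i - 1) = i" using True i by auto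
        have "(f (i-1), f (Suc (i-1))) \<in> E" using f(3) a(1) by blast
        then show ?thesis using a(2) by simp
      qed
      ultimately have "dist E (g i) (g (i+1)) \<le> 1" by (metis dist_le relpow_1)
      then show ?thesis using True by simp
    next
      case False
      then show ?thesis using Dmax gV i by simp
    qed
  qed
  also have "\<dots> = D + (c - 1 - D) * D"
  proof -
    have "(\<Sum>i = 1..<c. (if i \<le> D then 1 else D)) = (\<Sum>i\<in>{1..D}. 1) + (\<Sum>i\<in>{D<..<c}. D)"
    proof -
      have "{1..<c} = {1..D} \<union> {D<..<c}" using Dc by auto
      moreover have "(\<Sum>i = 1..D. (if i \<le> D then 1 else D)) = (\<Sum>i\<in>{1..D}. 1)" by simp
      moreover have "(\<Sum>i\<in>{D<..<c}. (if i \<le> D then 1 else D)) = (\<Sum>i\<in>{D<..<c}. D)" by simp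
      ultimately show ?thesis by (simp add: sum.union_disjoint ivl_disj_int)
    qed
    then show ?thesis by simp
  qed
  also have "\<dots> = D * (c - D)"
  proof -
    have "c \<ge> 1" using ne fin c_def by (simp add: Suc_leI card_gt_0_iff)
    then have "c - D = Suc (c - 1 - D)" using Dc by linarith
    then show ?thesis by simp
  qed
  also have "\<dots> \<le> (c div 2) * ((c + 1) div 2)" using Dc by (intro arith_ab) simp
  finally show ?thesis using ord_from_bij(1)[OF bij[unfolded c_def]] c_def by blast
qed



definition Eext :: "nat \<Rightarrow> nat \<Rightarrow> (nat \<times> nat) set" where
  "Eext k n = {(i, Suc i) | i. Suc i < k} \<union> {(k - 1, l) | l. k \<le> l \<and> l < n}
      \<union> {(l, 0) | l. k \<le> l \<and> l < n}"

lemma Eext_sub: "k \<le> n \<Longrightarrow> 1 \<le> k \<Longrightarrow> Eext k n \<subseteq> {0..<n} \<times> {0..<n}"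
  unfolding Eext_def by auto

lemma Eext_phi:
  assumes "1 \<le> k" "(x,y) \<in> Eext k n"
  shows "(min x k + 1) mod (k+1) = min y k"
  using assms unfolding Eext_def by auto

lemma Eext_walk_phi:
  assumes "1 \<le> k" "(x,y) \<in> Eext k n ^^ t"
  shows "(min x k + t) mod (k+1) = min y k"
  using assms(2)
proof (induction t arbitrary: y)
  case 0 then show ?case by simp
next
  case (Suc t)
  then obtain z where z: "(x,z) \<in> Eext k n ^^ t" "(z,y) \<in> Eext k n" by auto
  have "(min x k + Suc t) mod (k+1) = ((min x k + t) mod (k+1) + 1) mod (k+1)"
    by (simp add: mod_Suc_eq)
  also have "\<dots> = (min z k + 1) mod (k+1)" using Suc.IH[OF z(1)] by simp
  also have "\<dots> = min y k" using Eext_phi[OF assms(1) z(2)] .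
  finally show ?case .
qed

lemma Eext_D1:
  assumes "1 \<le> k" "(x,y) \<in> Eext k n ^^ t"
  shows "min y k \<le> min x k + t"
proof (rule ccontr)
  assume a: "\<not> ?thesis"
  then have "min x k + t < k + 1" by linarith
  then have "(min x k + t) mod (k+1) = min x k + t" by simp
  then show False using Eext_walk_phi[OF assms] a by simp
qed

lemma Eext_D2:
  assumes "1 \<le> k" "(x,y) \<in> Eext k n ^^ t" "k \<le> x" "x \<noteq> y"
  shows "min y k + 1 \<le> t"
proof (rule ccontr)
  assume a: "\<not> ?thesis"
  have "t \<noteq> 0"
  proof
    assume "t = 0" then show False using assms(2,4) by simp
  qed
  then obtain s where s: "t = Suc s" by (cases t) auto
  have "(min x k + t) mod (k+1) = (k + 1 + s) mod (k+1)" using assms(3) s by simp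
  also have "\<dots> = s mod (k+1)" by (metis mod_add_self1 add.commute)
  also have "\<dots> = s" using a s by (simp add: min_def split: if_splits)
  finally show False using Eext_walk_phi[OF assms(1,2)] a s by simp
qed

lemma Eext_path: "j < k \<Longrightarrow> i \<le> j \<Longrightarrow> (i, j) \<in> (Eext k n)\<^sup>*"
proof (induction j)
  case 0 then show ?case by simp
next
  case (Suc j)
  show ?case
  proof (cases "i = Suc j")
    case True then show ?thesis by simp
  next
    case False
    then have "(i,j) \<in> (Eext k n)\<^sup>*" using Suc by simp
    moreover have "(j, Suc j) \<in> Eext k n" using Suc.prems unfolding Eext_def by blast
    ultimately show ?thesis by (rule rtrancl_into_rtrancl)
  qed
qed

lemma Eext_sc:
  assumes "1 \<le> k" "k < n"
  shows "strongly_connected {0..<n} (Eext k n)"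
proof -
  have to0: "(v, 0) \<in> (Eext k n)\<^sup>*" if "v < n" for v
  proof (cases "k \<le> v")
    case True then have "(v,0) \<in> Eext k n" using that unfolding Eext_def by blast
    then show ?thesis by blast
  next
    case False
    then have "(v, k-1) \<in> (Eext k n)\<^sup>*" using Eext_path assms by simp
    moreover have "(k-1, k) \<in> Eext k n" "(k, 0) \<in> Eext k n" using assms unfolding Eext_def by blast+
    ultimately show ?thesis by (meson rtrancl_into_rtrancl)
  qed
  have from0: "(0, v) \<in> (Eext k n)\<^sup>*" if "v < n" for v
  proof (cases "k \<le> v")
    case True
    have "(0, k-1) \<in> (Eext k n)\<^sup>*" using Eext_path assms by simp
    moreover have "(k-1, v) \<in> Eext k n" using True that unfolding Eext_def by blast
    ultimately show ?thesis by (rule rtrancl_into_rtrancl)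
  next
    case False then show ?thesis using Eext_path by simp
  qed
  show ?thesis unfolding strongly_connected_def
  proof (intro conjI ballI)
    show "Eext k n \<subseteq> {0..<n} \<times> {0..<n}" using Eext_sub[of k n] assms by simp
  next
    fix u v assume "u \<in> {0..<n}" "v \<in> {0..<n}"
    then show "(u, v) \<in> (Eext k n)\<^sup>*" using to0 from0 by (meson atLeastLessThan_iff rtrancl_trans)
  qed
qed

lemma Eext_lower:
  assumes k1: "1 \<le> k" and kn: "k < n" and p: "\<pi> \<in> orderings {0..<n}"
  shows "(k+1) * (n - k - 1) \<le> comm_time {0..<n} (Eext k n) \<pi>"
proof -
  let ?E = "Eext k n"
  let ?V = "{0..<n::nat}"
  have sc: "strongly_connected ?V ?E" by (rule Eext_sc[OF k1 kn])
  have cV: "card ?V = n" by simp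
  define w where "w = inv_into ?V \<pi>"
  have bij: "bij_betw w {1..n} ?V" using ord_inv[OF p] cV unfolding w_def by simp
  have wV: "w i < n" if "i \<in> {1..n}" for i using bij that bij_betwE by fastforce
  have winj: "w i \<noteq> w j" if "i \<in> {1..n}" "j \<in> {1..n}" "i \<noteq> j" for i j
    using bij that unfolding bij_betw_def inj_on_def by blast
  have dwalk: "(x,y) \<in> ?E ^^ dist ?E x y" if "x < n" "y < n" for x y
    using sc that unfolding strongly_connected_def by (intro dist_walk) auto
  have d1: "min y k \<le> min x k + dist ?E x y" if "x < n" "y < n" for x y
    using Eext_D1[OF k1 dwalk[OF that]] .
  have d2: "min y k + 1 \<le> dist ?E x y" if "x < n" "y < n" "k \<le> x" "x \<noteq> y" for x y
    using Eext_D2[OF k1 dwalk[OF that(1,2)] that(3,4)] .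
  define S where "S j = (\<Sum>i = j..<n. dist ?E (w i) (w (i+1)))" for j
  define L where "L j = card {i\<in>{j..n}. k \<le> w i}" for j
  define h where "h v = k - min v k" for v
  have main: "1 \<le> j \<Longrightarrow> j \<le> n \<Longrightarrow> 1 \<le> L j \<Longrightarrow> (k+1) * (L j - 1) + h (w j) \<le> S j" for j
  proof (induction "n - j" arbitrary: j)
    case 0
    then have j: "j = n" by simp
    have "{i\<in>{j..n}. k \<le> w i} = (if k \<le> w n then {n} else {})" using j by auto
    then have "L j = (if k \<le> w n then 1 else 0)" unfolding L_def by simp
    then have "k \<le> w n" using 0 by (auto split: if_splits)
    then have "{i\<in>{j..n}. k \<le> w i} = {n}" using j by auto
    then show ?case using j \<open>k \<le> w n\<close> unfolding L_def h_def S_def by simp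
  next
    case (Suc t)
    then have jn: "j < n" by simp
    have IH: "1 \<le> L (Suc j) \<Longrightarrow> (k+1) * (L (Suc j) - 1) + h (w (Suc j)) \<le> S (Suc j)"
      using Suc by simp
    have Sj: "S j = dist ?E (w j) (w (Suc j)) + S (Suc j)"
      unfolding S_def using jn by (simp add: sum.atLeast_Suc_lessThan)
    have set: "{i\<in>{j..n}. k \<le> w i} = (if k \<le> w j then insert j else id) {i\<in>{Suc j..n}. k \<le> w i}"
      using jn by (auto simp: le_Suc_eq) (metis le_antisym not_less_eq_eq)
    have Lj: "L j = L (Suc j) + (if k \<le> w j then 1 else 0)"
      unfolding L_def set by simp
    have x: "w j < n" "w (Suc j) < n" "w j \<noteq> w (Suc j)"
      using wV winj Suc.prems jn by auto
    show ?case
    proof (cases "k \<le> w j")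
      case False
      then have LL: "L (Suc j) = L j" using Lj by simp
      have "h (w j) \<le> dist ?E (w j) (w (Suc j)) + h (w (Suc j))"
        using d1[OF x(1,2)] unfolding h_def by linarith
      then show ?thesis using IH LL Suc.prems Sj by simp
    next
      case True
      then have hx: "h (w j) = 0" unfolding h_def by simp
      show ?thesis
      proof (cases "L (Suc j) = 0")
        case True then show ?thesis using Lj hx by simp
      next
        case False
        have "k + 1 \<le> dist ?E (w j) (w (Suc j)) + h (w (Suc j))"
          using d2[OF x(1,2) True x(3)] unfolding h_def by linarith
        moreover have "(k+1) * (L (Suc j) - 1) + h (w (Suc j)) \<le> S (Suc j)" using IH False by simp
        ultimately have "(k+1) * (L (Suc j) - 1) + (k + 1) \<le> S j" using Sj by linarith
        moreover have "(k+1) * (L (Suc j) - 1) + (k + 1) = (k+1) * (L j - 1)"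
          using Lj True False by (cases "L (Suc j)") auto
        ultimately show ?thesis using hx by simp
      qed
    qed
  qed
  have L1: "L 1 = n - k"
  proof -
    have "w ` {i\<in>{1..n}. k \<le> w i} = {v\<in>?V. k \<le> v}"
    proof
      show "w ` {i\<in>{1..n}. k \<le> w i} \<subseteq> {v\<in>?V. k \<le> v}" using wV by auto
    next
      show "{v\<in>?V. k \<le> v} \<subseteq> w ` {i\<in>{1..n}. k \<le> w i}"
      proof
        fix x assume x: "x \<in> {v\<in>?V. k \<le> v}"
        then obtain i where "i \<in> {1..n}" "x = w i" using bij unfolding bij_betw_def by (metis (no_types, lifting) imageE mem_Collect_eq)
        then show "x \<in> w ` {i\<in>{1..n}. k \<le> w i}" using x by auto
      qed
    qed
    moreover have "inj_on w {i\<in>{1..n}. k \<le> w i}"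
      using bij unfolding bij_betw_def by (auto intro: inj_on_subset)
    ultimately have "L 1 = card {v\<in>?V. k \<le> v}" unfolding L_def by (metis card_image)
    moreover have "{v\<in>?V. k \<le> v} = {k..<n}" by auto
    ultimately show ?thesis by simp
  qed
  have "(k+1) * (L 1 - 1) + h (w 1) \<le> S 1" using main[of 1] L1 kn by simp
  moreover have "S 1 = comm_time ?V ?E \<pi>" unfolding S_def comm_time_def w_def by simp
  ultimately show ?thesis using L1 by simp
qed



definition Ecyc :: "nat \<Rightarrow> (nat \<times> nat) set" where
  "Ecyc n = {(i, Suc i mod n) | i. i < n}"

lemma Ecyc_walk: "(u,v) \<in> Ecyc n ^^ t \<Longrightarrow> u < n \<Longrightarrow> v = (u + t) mod n"
proof (induction t arbitrary: v)
  case 0 then show ?case by simp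
next
  case (Suc t)
  then obtain z where z: "(u,z) \<in> Ecyc n ^^ t" "(z,v) \<in> Ecyc n" by auto
  have "z = (u+t) mod n" using Suc.IH[OF z(1) Suc.prems(2)] .
  moreover have "v = Suc z mod n" using z(2) unfolding Ecyc_def by auto
  ultimately show ?case by (simp add: mod_Suc_eq)
qed

lemma Ecyc_reach: "u < n \<Longrightarrow> (u, (u + t) mod n) \<in> (Ecyc n)\<^sup>*"
proof (induction t)
  case 0 then show ?case by simp
next
  case (Suc t)
  have "((u+t) mod n, Suc ((u+t) mod n) mod n) \<in> Ecyc n"
    using Suc.prems unfolding Ecyc_def by auto
  then have "((u+t) mod n, (u + Suc t) mod n) \<in> Ecyc n" by (simp add: mod_Suc_eq)
  with Suc show ?case by (meson rtrancl_into_rtrancl)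
qed

lemma Ecyc_sc:
  assumes "1 \<le> n"
  shows "strongly_connected {0..<n} (Ecyc n)"
  unfolding strongly_connected_def
proof (intro conjI ballI)
  show "Ecyc n \<subseteq> {0..<n} \<times> {0..<n}" using assms unfolding Ecyc_def by auto
next
  fix u v assume uv: "u \<in> {0..<n}" "v \<in> {0..<n}"
  have "u + (v + n - u) = v + n" using uv by auto
  then have "(u + (v + n - u)) mod n = v" using uv by simp
  then show "(u,v) \<in> (Ecyc n)\<^sup>*" using Ecyc_reach[of u n "v + n - u"] uv by simp
qed

lemma Ecyc_dist:
  assumes "1 \<le> u" "u < n"
  shows "n - 1 \<le> dist (Ecyc n) u (u - 1)"
proof (rule ccontr)
  let ?t = "dist (Ecyc n) u (u - 1)"
  assume a: "\<not> ?thesis"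
  have "(u, u-1) \<in> (Ecyc n)\<^sup>*" using Ecyc_sc[of n] assms unfolding strongly_connected_def by auto
  then have w: "(u, u-1) \<in> Ecyc n ^^ ?t" by (rule dist_walk)
  have "u - 1 = (u + ?t) mod n" using Ecyc_walk[OF w] assms(2) .
  moreover have "(u + ?t) mod n \<noteq> u - 1"
  proof (cases "u + ?t < n")
    case True then have "(u + ?t) mod n = u + ?t" by simp
    then show ?thesis using assms by linarith
  next
    case False
    then have "(u + ?t) mod n = (u + ?t - n) mod n" by (simp add: le_mod_geq)
    also have "\<dots> = u + ?t - n" using a assms by (intro mod_less) linarith
    finally have "(u + ?t) mod n = u + ?t - n" .
    then show ?thesis using a assms False by arith
  qed
  ultimately show False by simp
qed

lemma Ecyc_lower:
  assumes "1 \<le> n"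
  shows "\<exists>\<pi>\<in>orderings {0..<n}. (n-1)*(n-1) \<le> comm_time {0..<n} (Ecyc n) \<pi>"
proof -
  define g where "g i = n - i" for i
  have bij: "bij_betw g {1..card {0..<n}} {0..<n}"
    unfolding g_def by (rule bij_betw_byWitness[where f'="\<lambda>i. n - i"]) auto
  have "(\<Sum>i = 1..<n. n - 1) \<le> (\<Sum>i = 1..<card {0..<n}. dist (Ecyc n) (g i) (g (i+1)))"
  proof (simp only: card_atLeastLessThan diff_zero, rule sum_mono)
    fix i assume "i \<in> {1..<n}"
    then have "g (i+1) = g i - 1" "1 \<le> g i" "g i < n" unfolding g_def by auto
    then show "n - 1 \<le> dist (Ecyc n) (g i) (g (i+1))" using Ecyc_dist by simp
  qed
  then have "(n-1)*(n-1) \<le> comm_time {0..<n} (Ecyc n) (inv_into {1..card {0..<n}} g)"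
    using ord_from_bij(2)[OF bij] by simp
  then show ?thesis using ord_from_bij(1)[OF bij] by blast
qed


lemma Tmin_le:
  assumes sc: "strongly_connected V E" and fin: "finite V" and ne: "V \<noteq> {}"
  shows "T_min V E \<le> (card V div 2) * ((card V + 1) div 2)"
proof -
  obtain \<pi> where p: "\<pi> \<in> orderings V" "comm_time V E \<pi> \<le> (card V div 2) * ((card V + 1) div 2)"
    using Tmin_upper[OF sc fin ne] by blast
  have "T_min V E \<le> comm_time V E \<pi>" unfolding T_min_def
    using image_finite[OF sc fin] p(1) by (intro Min_le) auto
  then show ?thesis using p(2) by simp
qed

lemma Tmax_le:
  assumes sc: "strongly_connected V E" and fin: "finite V"
  shows "T_max V E \<le> (card V - 1) * (card V - 1)"
  unfolding T_max_def using image_finite[OF sc fin] orderings_nonempty[OF fin]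
    comm_time_bound[OF sc fin] by (subst Max_le_iff) auto

theorem proposition2:
  fixes n :: nat
  assumes "n \<ge> 3"
  shows "is_max {T_min {0..<n} E | E. strongly_connected {0..<n} E}
           ((n div 2) * ((n + 1) div 2))
       \<and> is_max {T_max {0..<n} E | E. strongly_connected {0..<n} E}
           ((n - 1) ^ 2)"
proof
  let ?V = "{0..<n::nat}"
  have fin: "finite ?V" and ne: "?V \<noteq> {}" and cV: "card ?V = n" using assms by auto
  show "is_max {T_min ?V E | E. strongly_connected ?V E} ((n div 2) * ((n + 1) div 2))"
    unfolding is_max_def
  proof
    define k where "k = (n + 1) div 2 - 1"
    have k1: "1 \<le> k" and kn: "k < n" using assms unfolding k_def by auto
    have kk: "(k+1) * (n - k - 1) = (n div 2) * ((n + 1) div 2)"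
    proof -
      have "k + 1 = (n+1) div 2" using assms unfolding k_def by simp
      moreover have "n - k - 1 = n div 2" using assms unfolding k_def by presburger
      ultimately show ?thesis by (simp add: mult.commute)
    qed
    have sc: "strongly_connected ?V (Eext k n)" by (rule Eext_sc[OF k1 kn])
    have "(n div 2) * ((n + 1) div 2) \<le> T_min ?V (Eext k n)"
      unfolding T_min_def using image_finite[OF sc fin] orderings_nonempty[OF fin]
        Eext_lower[OF k1 kn] kk by (subst Min_ge_iff) auto
    moreover have "T_min ?V (Eext k n) \<le> (n div 2) * ((n + 1) div 2)"
      using Tmin_le[OF sc fin ne] cV by simp
    ultimately show "(n div 2) * ((n + 1) div 2) \<in> {T_min ?V E | E. strongly_connected ?V E}"
      using sc by (metis (mono_tags, lifting) le_antisym mem_Collect_eq)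
  next
    show "\<forall>y\<in>{T_min ?V E | E. strongly_connected ?V E}. y \<le> (n div 2) * ((n + 1) div 2)"
      using Tmin_le[OF _ fin ne] cV by auto
  qed
next
  let ?V = "{0..<n::nat}"
  have fin: "finite ?V" and cV: "card ?V = n" using assms by auto
  show "is_max {T_max ?V E | E. strongly_connected ?V E} ((n - 1) ^ 2)"
    unfolding is_max_def
  proof
    have sc: "strongly_connected ?V (Ecyc n)" using Ecyc_sc assms by simp
    obtain \<pi> where p: "\<pi> \<in> orderings ?V" "(n-1)*(n-1) \<le> comm_time ?V (Ecyc n) \<pi>"
      using Ecyc_lower[of n] assms by auto
    have "comm_time ?V (Ecyc n) \<pi> \<le> T_max ?V (Ecyc n)" unfolding T_max_def
      using image_finite[OF sc fin] p(1) by (intro Max_ge) auto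
    moreover have "T_max ?V (Ecyc n) \<le> (n-1)*(n-1)" using Tmax_le[OF sc fin] cV by simp
    ultimately have "T_max ?V (Ecyc n) = (n - 1) ^ 2" using p(2) by (simp add: power2_eq_square)
    then show "(n - 1) ^ 2 \<in> {T_max ?V E | E. strongly_connected ?V E}"
      using sc by (metis (mono_tags, lifting) mem_Collect_eq)
  next
    show "\<forall>y\<in>{T_max ?V E | E. strongly_connected ?V E}. y \<le> (n - 1) ^ 2"
      using Tmax_le[OF _ fin] cV by (auto simp: power2_eq_square)
  qed
qed

end
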